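(* Let $\mathcal{R}^{rsc}$ be a rich single-crossing domain and $F:\mathcal{R}^{rsc}\to\mathbb{Z}$ strategy-proof. Then $F$ is monotone, $V^F$ is continuous, and $F$ is locally strategy-proof in range.
   Context: $\mathbb{Z}=[0,\infty)\times[0,1]$; $(t',q')<(t'',q'')$ means $t'<t''$, $q'<q''$; $x\le y$ means $x=y$ or $x<y$; $\square(z)=\{x:x\le z\}$. A classical preference is a complete transitive relation $R$ on $\mathbb{Z}$ (strict part $P$, indifference $I$) strictly decreasing in $t$ for fixed $q$, strictly increasing in $q$ for fixed $t$, with closed upper and lower contour sets. Distinct classical preferences satisfy single-crossing if any indifference set of one meets any indifference set of the other in at most one point. A rich single-crossing domain $\mathcal{R}^{rsc}$ is a set of pairwise single-crossing classical preferences such that for all $x'<x''$ some member is indifferent between them. For distinct members, $R'\prec R''$ means $\square(z)\cap\{x:xR''z\}\subseteq\square(z)\cap\{x:xR'z\}$ for all $z$; $\prec$ is a linear order, $\mathcal{R}^{rsc}$ has the order topology. A mechanism $F:\mathcal{R}^{rsc}\to\mathbb{Z}$ with range $Rn(F)$ is strategy-proof if $F(R')R'F(R'')$ for all $R',R''$; monotone if $R'\prec R''$ implies $F(R')\le F(R'')$. $V^F(R)=\{z:zIF(R)\}$ is continuous if for every $R$ and every monotone sequence $R^n\to R$ (i.e. $R^n\precsim R^{n+1}$ for all $n$ or $R^{n+1}\precsim R^n$ for all $n$), $F(R^n)$ converges and $\lim F(R^n)\,I\,F(R)$. $Rn(F)$ is ordered if any two distinct elements $x',x''$ satisfy $x'<x''$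 or $x''<x'$. For ordered $Rn(F)$, two elements $x'<x''$ of $Rn(F)$ are adjacent if no $z\in Rn(F)$ satisfies $x'<z<x''$. $F$ is locally strategy-proof in range if $Rn(F)$ is ordered and for all $R',R''$ with $F(R'),F(R'')$ adjacent, $F(R')R'F(R'')$ and $F(R'')R''F(R')$. *)

theory Defs
  imports "HOL-Analysis.Analysis"
begin

type_synonym bndl = "real \<times> real"
type_synonym pref = "bndl \<Rightarrow> bndl \<Rightarrow> bool"   (* R x y  means  x R y *)

definition ZZ :: "bndl set" where
  "ZZ = {(t, q). 0 \<le> t \<and> 0 \<le> q \<and> q \<le> 1}"

definition bless :: "bndl \<Rightarrow> bndl \<Rightarrow> bool" where
  "bless x y \<longleftrightarrow> fst x < fst y \<and> snd x < snd y"

definition bleq :: "bndl \<Rightarrow> bndl \<Rightarrow> bool" where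
  "bleq x y \<longleftrightarrow> x = y \<or> bless x y"

definition box :: "bndl \<Rightarrow> bndl set" where
  "box z = {x \<in> ZZ. bleq x z}"

definition strictP :: "pref \<Rightarrow> bndl \<Rightarrow> bndl \<Rightarrow> bool" where
  "strictP R x y \<longleftrightarrow> R x y \<and> \<not> R y x"

definition indiff :: "pref \<Rightarrow> bndl \<Rightarrow> bndl \<Rightarrow> bool" where
  "indiff R x y \<longleftrightarrow> R x y \<and> R y x"

definition classical :: "pref \<Rightarrow> bool" where
  "classical R \<longleftrightarrow>
     (\<forall>x y. R x y \<longrightarrow> x \<in> ZZ \<and> y \<in> ZZ) \<and>
     (\<forall>x\<in>ZZ. \<forall>y\<in>ZZ. R x y \<or> R y x) \<and>
     (\<forall>x\<in>ZZ. \<forall>y\<in>ZZ. \<forall>z\<in>ZZ. R x y \<longrightarrow> R y z \<longrightarrow> R x z) \<and>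
     (\<forall>t t' q. (t, q) \<in> ZZ \<longrightarrow> (t', q) \<in> ZZ \<longrightarrow> t < t' \<longrightarrow> strictP R (t, q) (t', q)) \<and>
     (\<forall>t q q'. (t, q) \<in> ZZ \<longrightarrow> (t, q') \<in> ZZ \<longrightarrow> q < q' \<longrightarrow> strictP R (t, q') (t, q)) \<and>
     (\<forall>z\<in>ZZ. closed {x \<in> ZZ. R x z} \<and> closed {x \<in> ZZ. R z x})"

definition single_crossing :: "pref \<Rightarrow> pref \<Rightarrow> bool" where
  "single_crossing R1 R2 \<longleftrightarrow>
     (\<forall>z1\<in>ZZ. \<forall>z2\<in>ZZ. \<forall>x\<in>ZZ. \<forall>y\<in>ZZ.
        indiff R1 x z1 \<longrightarrow> indiff R2 x z2 \<longrightarrow> indiff R1 y z1 \<longrightarrow> indiff R2 y z2 \<longrightarrow> x = y)"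

definition rich_single_crossing :: "pref set \<Rightarrow> bool" where
  "rich_single_crossing D \<longleftrightarrow>
     (\<forall>R\<in>D. classical R) \<and>
     (\<forall>R1\<in>D. \<forall>R2\<in>D. R1 \<noteq> R2 \<longrightarrow> single_crossing R1 R2) \<and>
     (\<forall>x1\<in>ZZ. \<forall>x2\<in>ZZ. bless x1 x2 \<longrightarrow> (\<exists>R\<in>D. indiff R x1 x2))"

definition prec :: "pref \<Rightarrow> pref \<Rightarrow> bool" where
  "prec R1 R2 \<longleftrightarrow> R1 \<noteq> R2 \<and>
     (\<forall>z\<in>ZZ. box z \<inter> {x \<in> ZZ. R2 x z} \<subseteq> box z \<inter> {x \<in> ZZ. R1 x z})"

definition preceq :: "pref \<Rightarrow> pref \<Rightarrow> bool" where
  "preceq R1 R2 \<longleftrightarrow> R1 = R2 \<or> prec R1 R2"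

(* convergence in the order topology of (D, \<prec>) *)
definition order_conv :: "pref set \<Rightarrow> (nat \<Rightarrow> pref) \<Rightarrow> pref \<Rightarrow> bool" where
  "order_conv D Rs R \<longleftrightarrow>
     (\<forall>A\<in>D. prec A R \<longrightarrow> (\<exists>N. \<forall>n\<ge>N. prec A (Rs n))) \<and>
     (\<forall>B\<in>D. prec R B \<longrightarrow> (\<exists>N. \<forall>n\<ge>N. prec (Rs n) B))"

definition strategy_proof :: "pref set \<Rightarrow> (pref \<Rightarrow> bndl) \<Rightarrow> bool" where
  "strategy_proof D F \<longleftrightarrow> (\<forall>R1\<in>D. \<forall>R2\<in>D. R1 (F R1) (F R2))"

definition monotone_mech :: "pref set \<Rightarrow> (pref \<Rightarrow> bndl) \<Rightarrow> bool" where
  "monotone_mech D F \<longleftrightarrow> (\<forall>R1\<in>D. \<forall>R2\<in>D. prec R1 R2 \<longrightarrow> bleq (F R1) (F R2))"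

definition VF_continuous :: "pref set \<Rightarrow> (pref \<Rightarrow> bndl) \<Rightarrow> bool" where
  "VF_continuous D F \<longleftrightarrow>
     (\<forall>R\<in>D. \<forall>Rs. (\<forall>n. Rs n \<in> D) \<longrightarrow>
        ((\<forall>n. preceq (Rs n) (Rs (Suc n))) \<or> (\<forall>n. preceq (Rs (Suc n)) (Rs n))) \<longrightarrow>
        order_conv D Rs R \<longrightarrow>
        (\<exists>L. (\<lambda>n. F (Rs n)) \<longlonglongrightarrow> L \<and> indiff R L (F R)))"

definition ordered_range :: "pref set \<Rightarrow> (pref \<Rightarrow> bndl) \<Rightarrow> bool" where
  "ordered_range D F \<longleftrightarrow>
     (\<forall>x\<in>F ` D. \<forall>y\<in>F ` D. x \<noteq> y \<longrightarrow> bless x y \<or> bless y x)"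

definition adjacent :: "pref set \<Rightarrow> (pref \<Rightarrow> bndl) \<Rightarrow> bndl \<Rightarrow> bndl \<Rightarrow> bool" where
  "adjacent D F x y \<longleftrightarrow> x \<in> F ` D \<and> y \<in> F ` D \<and> bless x y \<and>
     \<not> (\<exists>z\<in>F ` D. bless x z \<and> bless z y)"

definition locally_sp_in_range :: "pref set \<Rightarrow> (pref \<Rightarrow> bndl) \<Rightarrow> bool" where
  "locally_sp_in_range D F \<longleftrightarrow> ordered_range D F \<and>
     (\<forall>R1\<in>D. \<forall>R2\<in>D. (adjacent D F (F R1) (F R2) \<or> adjacent D F (F R2) (F R1)) \<longrightarrow>
        R1 (F R1) (F R2) \<and> R2 (F R2) (F R1))"

end

theory Submission
  imports Defs
begin

lemma cl_ZZ: "classical R \<Longrightarrow> R x y \<Longrightarrow> x \<in> ZZ \<and> y \<in> ZZ"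
  unfolding classical_def by blast
lemma cl_total: "classical R \<Longrightarrow> x \<in> ZZ \<Longrightarrow> y \<in> ZZ \<Longrightarrow> R x y \<or> R y x"
  unfolding classical_def by blast
lemma cl_refl: "classical R \<Longrightarrow> x \<in> ZZ \<Longrightarrow> R x x"
  using cl_total by blast
lemma cl_trans: "classical R \<Longrightarrow> R x y \<Longrightarrow> R y z \<Longrightarrow> R x z"
  unfolding classical_def by blast
lemma cl_t: "classical R \<Longrightarrow> (t, q) \<in> ZZ \<Longrightarrow> (t', q) \<in> ZZ \<Longrightarrow> t < t' \<Longrightarrow> strictP R (t, q) (t', q)"
  unfolding classical_def by blast
lemma cl_q: "classical R \<Longrightarrow> (t, q) \<in> ZZ \<Longrightarrow> (t, q') \<in> ZZ \<Longrightarrow> q < q' \<Longrightarrow> strictP R (t, q') (t, q)"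
  unfolding classical_def by blast
lemma cl_closed1: "classical R \<Longrightarrow> z \<in> ZZ \<Longrightarrow> closed {x \<in> ZZ. R x z}"
  unfolding classical_def by blast
lemma cl_closed2: "classical R \<Longrightarrow> z \<in> ZZ \<Longrightarrow> closed {x \<in> ZZ. R z x}"
  unfolding classical_def by blast

lemma ZZ_iff: "(t, q) \<in> ZZ \<longleftrightarrow> 0 \<le> t \<and> 0 \<le> q \<and> q \<le> 1"
  unfolding ZZ_def by auto
lemma ZZ_iff': "x \<in> ZZ \<longleftrightarrow> 0 \<le> fst x \<and> 0 \<le> snd x \<and> snd x \<le> 1"
  unfolding ZZ_def by (cases x) auto

lemma strict_trans1: "classical R \<Longrightarrow> strictP R a b \<Longrightarrow> R b c \<Longrightarrow> strictP R a c"
  unfolding strictP_def by (meson cl_trans)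
lemma strict_trans2: "classical R \<Longrightarrow> R a b \<Longrightarrow> strictP R b c \<Longrightarrow> strictP R a c"
  unfolding strictP_def by (meson cl_trans)

lemma cl_dom:
  assumes R: "classical R" and x: "x \<in> ZZ" and y: "y \<in> ZZ"
    and "fst x \<le> fst y" "snd y \<le> snd x" "x \<noteq> y"
  shows "strictP R x y"
proof -
  obtain tx qx where xx: "x = (tx, qx)" by (cases x)
  obtain ty qy where yy: "y = (ty, qy)" by (cases y)
  have m: "(tx, qy) \<in> ZZ" using x y unfolding xx yy ZZ_iff by auto
  show ?thesis
  proof (cases "qy < qx")
    case True
    have s1: "strictP R (tx, qx) (tx, qy)" using cl_q[OF R m] x True xx by auto
    show ?thesis
    proof (cases "tx < ty")
      case True
      have "strictP R (tx, qy) (ty, qy)" using cl_t[OF R m] y True yy by auto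
      then show ?thesis using s1 xx yy strict_trans1[OF R s1] unfolding strictP_def by auto
    next
      case False
      then show ?thesis using s1 xx yy assms by auto
    qed
  next
    case False
    then have "qy = qx" "tx < ty" using assms xx yy by auto
    then show ?thesis using cl_t[OF R m] y xx yy by auto
  qed
qed

lemma cl_dom_weak:
  assumes R: "classical R" and x: "x \<in> ZZ" and y: "y \<in> ZZ"
    and "fst x \<le> fst y" "snd y \<le> snd x"
  shows "R x y"
  using cl_dom[OF assms] cl_refl[OF R x] unfolding strictP_def by (cases "x = y") auto

lemma open_lower:
  assumes R: "classical R" and a: "a \<in> ZZ" and y: "y \<in> ZZ" and s: "strictP R a y"
  shows "\<exists>e>0. \<forall>y'\<in>ZZ. dist y' y < e \<longrightarrow> strictP R a y'"
proof -
  have c: "closed {x \<in> ZZ. R x a}" by (rule cl_closed1[OF R a])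
  have "y \<notin> {x \<in> ZZ. R x a}" using s unfolding strictP_def by auto
  then obtain e where e: "e > 0" "ball y e \<subseteq> - {x \<in> ZZ. R x a}"
    using c unfolding closed_def open_contains_ball by blast
  show ?thesis
  proof (intro exI[of _ e] conjI ballI impI e(1))
    fix y' assume "y' \<in> ZZ" "dist y' y < e"
    then have "\<not> R y' a" using e(2) by (auto simp: dist_commute)
    then show "strictP R a y'" using cl_total[OF R a \<open>y' \<in> ZZ\<close>] unfolding strictP_def by auto
  qed
qed

lemma open_upper:
  assumes R: "classical R" and a: "a \<in> ZZ" and y: "y \<in> ZZ" and s: "strictP R y a"
  shows "\<exists>e>0. \<forall>y'\<in>ZZ. dist y' y < e \<longrightarrow> strictP R y' a"
proof -
  have c: "closed {x \<in> ZZ. R a x}" by (rule cl_closed2[OF R a])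
  have "y \<notin> {x \<in> ZZ. R a x}" using s unfolding strictP_def by auto
  then obtain e where e: "e > 0" "ball y e \<subseteq> - {x \<in> ZZ. R a x}"
    using c unfolding closed_def open_contains_ball by blast
  show ?thesis
  proof (intro exI[of _ e] conjI ballI impI e(1))
    fix y' assume "y' \<in> ZZ" "dist y' y < e"
    then have "\<not> R a y'" using e(2) by (auto simp: dist_commute)
    then show "strictP R y' a" using cl_total[OF R a \<open>y' \<in> ZZ\<close>] unfolding strictP_def by auto
  qed
qed

lemma ivt_t:
  assumes R: "classical R" and r: "r \<in> ZZ" and ab: "0 \<le> a" "a \<le> b" and q: "0 \<le> q" "q \<le> 1"
    and ra: "R (a, q) r" and rb: "R r (b, q)"
  shows "\<exists>t. a \<le> t \<and> t \<le> b \<and> indiff R (t, q) r"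
proof -
  let ?f = "\<lambda>t::real. (t, q)"
  have cf: "\<And>x. continuous (at x) ?f" by (intro continuous_intros)
  define E1 where "E1 = ?f -` {x \<in> ZZ. R x r}"
  define E2 where "E2 = ?f -` {x \<in> ZZ. R r x}"
  have c1: "closed E1" unfolding E1_def by (rule continuous_closed_vimage[OF cl_closed1[OF R r] cf])
  have c2: "closed E2" unfolding E2_def by (rule continuous_closed_vimage[OF cl_closed2[OF R r] cf])
  have cov: "{a..b} \<subseteq> E1 \<union> E2"
  proof
    fix t assume "t \<in> {a..b}"
    then have "(t, q) \<in> ZZ" using ab q by (auto simp: ZZ_iff)
    then show "t \<in> E1 \<union> E2" using cl_total[OF R _ r] unfolding E1_def E2_def by auto
  qed
  have "a \<in> E1 \<inter> {a..b}" using ra cl_ZZ[OF R ra] ab unfolding E1_def by auto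
  moreover have "b \<in> E2 \<inter> {a..b}" using rb cl_ZZ[OF R rb] ab unfolding E2_def by auto
  ultimately have "E1 \<inter> E2 \<inter> {a..b} \<noteq> {}"
    using connected_closedD[OF connected_Icc _ cov c1 c2] by blast
  then obtain t where "t \<in> E1" "t \<in> E2" "t \<in> {a..b}" by blast
  then show ?thesis unfolding E1_def E2_def indiff_def by auto
qed


lemma sc_noboth:
  assumes SC: "single_crossing A B" and A: "classical A" and B: "classical B"
    and p: "p \<in> ZZ" and r: "r \<in> ZZ" and "indiff A p r" "indiff B p r"
  shows "p = r"
  using SC assms cl_refl[OF A r] cl_refl[OF B r] unfolding single_crossing_def indiff_def by blast

lemma per_top:
  assumes A: "classical A" and B: "classical B" and SC: "single_crossing A B"
    and r: "r \<in> ZZ" and p1: "p1 \<in> ZZ" "bless p1 r" "A p1 r" "B r p1"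
    and p2: "p2 \<in> ZZ" "bless p2 r" "B p2 r" "A r p2"
  shows False
proof -
  define lo where "lo = min (snd p1) (snd p2)"
  define hi where "hi = max (snd p1) (snd p2)"
  have hi: "hi < snd r" "0 \<le> lo" "lo \<le> hi" using p1 p2 unfolding hi_def lo_def bless_def ZZ_iff' by auto
  have r1: "0 \<le> fst r" "snd r \<le> 1" using r by (auto simp: ZZ_iff')
  define K where "K = cbox (0, lo) (fst r, hi)"
  have cK: "compact K" unfolding K_def by simp
  define C1 where "C1 = snd ` (K \<inter> {x \<in> ZZ. A x r} \<inter> {x \<in> ZZ. B r x})"
  define C2 where "C2 = snd ` (K \<inter> {x \<in> ZZ. B x r} \<inter> {x \<in> ZZ. A r x})"
  have closedC: "closed C1" "closed C2"
    unfolding C1_def C2_def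
    by (intro compact_imp_closed compact_continuous_image continuous_on_snd continuous_on_id
          closed_Int_compact cK cl_closed1 cl_closed2 A B r compact_Int_closed)+
  have inK: "\<And>t q. 0 \<le> t \<Longrightarrow> t \<le> fst r \<Longrightarrow> lo \<le> q \<Longrightarrow> q \<le> hi \<Longrightarrow> (t, q) \<in> K"
    unfolding K_def by (simp add: cbox_Pair_eq)
  have q1: "snd p1 \<in> C1 \<inter> {lo..hi}"
  proof -
    have "p1 \<in> K" using inK[of "fst p1" "snd p1"] p1 unfolding bless_def ZZ_iff' lo_def hi_def by auto
    then show ?thesis using p1 r unfolding C1_def lo_def hi_def by auto
  qed
  have q2: "snd p2 \<in> C2 \<inter> {lo..hi}"
  proof -
    have "p2 \<in> K" using inK[of "fst p2" "snd p2"] p2 unfolding bless_def ZZ_iff' lo_def hi_def by auto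
    then show ?thesis using p2 r unfolding C2_def lo_def hi_def by auto
  qed
  have cov: "{lo..hi} \<subseteq> C1 \<union> C2"
  proof
    fix q assume q: "q \<in> {lo..hi}"
    have qZ: "0 \<le> q" "q \<le> 1" using q hi r1 by auto
    have z0: "(0, q) \<in> ZZ" using qZ by (simp add: ZZ_iff)
    have zr: "(fst r, q) \<in> ZZ" using qZ r1 by (simp add: ZZ_iff)
    have "q \<ge> snd p1 \<or> q \<ge> snd p2" using q unfolding lo_def by auto
    then show "q \<in> C1 \<union> C2"
    proof
      assume "q \<ge> snd p1"
      then have "A (0, q) p1" using cl_dom_weak[OF A z0 p1(1)] p1(1) by (auto simp: ZZ_iff')
      then have a0: "A (0, q) r" using cl_trans[OF A _ p1(3)] by blast
      have a1: "A r (fst r, q)" using cl_dom_weak[OF A r zr] q hi by auto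
      obtain t where t: "0 \<le> t" "t \<le> fst r" "indiff A (t, q) r"
        using ivt_t[OF A r _ r1(1) qZ a0 a1] by auto
      have tz: "(t, q) \<in> ZZ" using t qZ by (simp add: ZZ_iff)
      have tk: "(t, q) \<in> K" using inK t q by auto
      show ?thesis
      proof (cases "B r (t, q)")
        case True then show ?thesis using tz tk t r unfolding C1_def indiff_def by force
      next
        case False then have "B (t, q) r" using cl_total[OF B tz r] by auto
        then show ?thesis using tz tk t r unfolding C2_def indiff_def by force
      qed
    next
      assume "q \<ge> snd p2"
      then have "B (0, q) p2" using cl_dom_weak[OF B z0 p2(1)] p2(1) by (auto simp: ZZ_iff')
      then have a0: "B (0, q) r" using cl_trans[OF B _ p2(3)] by blast
      have a1: "B r (fst r, q)" using cl_dom_weak[OF B r zr] q hi by auto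
      obtain t where t: "0 \<le> t" "t \<le> fst r" "indiff B (t, q) r"
        using ivt_t[OF B r _ r1(1) qZ a0 a1] by auto
      have tz: "(t, q) \<in> ZZ" using t qZ by (simp add: ZZ_iff)
      have tk: "(t, q) \<in> K" using inK t q by auto
      show ?thesis
      proof (cases "A (t, q) r")
        case True then show ?thesis using tz tk t r unfolding C1_def indiff_def by force
      next
        case False then have "A r (t, q)" using cl_total[OF A tz r] by auto
        then show ?thesis using tz tk t r unfolding C2_def indiff_def by force
      qed
    qed
  qed
  have disj: "C1 \<inter> C2 \<inter> {lo..hi} = {}"
  proof (rule ccontr)
    assume "C1 \<inter> C2 \<inter> {lo..hi} \<noteq> {}"
    then obtain q where q: "q \<in> C1" "q \<in> C2" "q \<in> {lo..hi}" by blast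
    obtain t1 where t1: "(t1, q) \<in> ZZ" "A (t1, q) r" "B r (t1, q)"
      using q(1) unfolding C1_def by auto
    obtain t2 where t2: "(t2, q) \<in> ZZ" "B (t2, q) r" "A r (t2, q)"
      using q(2) unfolding C2_def by auto
    have "t1 \<le> t2"
    proof (rule ccontr)
      assume "\<not> t1 \<le> t2"
      then have "strictP A (t2, q) (t1, q)" using cl_t[OF A t2(1) t1(1)] by auto
      moreover have "A (t1, q) (t2, q)" using cl_trans[OF A t1(2) t2(3)] .
      ultimately show False unfolding strictP_def by auto
    qed
    moreover have "t2 \<le> t1"
    proof (rule ccontr)
      assume "\<not> t2 \<le> t1"
      then have "strictP B (t1, q) (t2, q)" using cl_t[OF B t1(1) t2(1)] by auto
      moreover have "B (t2, q) (t1, q)" using cl_trans[OF B t2(2) t1(3)] .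
      ultimately show False unfolding strictP_def by auto
    qed
    ultimately have "t1 = t2" by auto
    then have "indiff A (t1, q) r" "indiff B (t1, q) r" using t1 t2 unfolding indiff_def by auto
    then have "(t1, q) = r" using sc_noboth[OF SC A B t1(1) r] by auto
    then show False using q(3) hi by auto
  qed
  show False using connected_closedD[OF connected_Icc disj cov closedC] q1 q2 by auto
qed


definition WW :: "bndl set" where "WW = {x. 0 < fst x \<and> 0 < snd x \<and> snd x \<le> 1}"

lemma WW_ZZ: "x \<in> WW \<Longrightarrow> x \<in> ZZ" unfolding WW_def ZZ_iff' by auto

lemma exist_indiff:
  assumes A: "classical A" and r: "r \<in> WW"
  shows "\<exists>t q. 0 < t \<and> t < fst r \<and> 0 \<le> q \<and> q < snd r \<and> indiff A (t, q) r"
proof -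
  have rZ: "r \<in> ZZ" using WW_ZZ r .
  have r1: "0 < fst r" "0 < snd r" "snd r \<le> 1" using r unfolding WW_def by auto
  have z0: "(0, snd r) \<in> ZZ" using r1 by (simp add: ZZ_iff)
  have "strictP A (0, snd r) (fst r, snd r)" using cl_t[OF A z0] rZ r1 by (cases r) auto
  then have s: "strictP A (0, snd r) r" by simp
  obtain e where e: "e > 0" "\<forall>y'\<in>ZZ. dist y' (0, snd r) < e \<longrightarrow> strictP A y' r"
    using open_upper[OF A rZ z0 s] by auto
  define q where "q = max 0 (snd r - e/2)"
  have q: "0 \<le> q" "q < snd r" "q \<le> 1" using e r1 unfolding q_def by auto
  have qZ: "(0, q) \<in> ZZ" using q by (simp add: ZZ_iff)
  have "dist (0::real, q) (0, snd r) = \<bar>q - snd r\<bar>"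
    by (simp add: dist_Pair_Pair dist_real_def)
  also have "\<dots> < e" using e r1 unfolding q_def by auto
  finally have s0: "strictP A (0, q) r" using e(2) qZ by auto
  have zr: "(fst r, q) \<in> ZZ" using q r1 by (simp add: ZZ_iff)
  have "strictP A (fst r, snd r) (fst r, q)" using cl_q[OF A zr] rZ q by (cases r) auto
  then have s1: "strictP A r (fst r, q)" by simp
  have r0: "0 \<le> fst r" using r1 by simp
  obtain t where t: "0 \<le> t" "t \<le> fst r" "indiff A (t, q) r"
    using ivt_t[OF A rZ order_refl r0 q(1) q(3)] s0 s1 unfolding strictP_def by blast
  have "t \<noteq> 0" using t(3) s0 unfolding indiff_def strictP_def by auto
  moreover have "t \<noteq> fst r" using t(3) s1 unfolding indiff_def strictP_def by auto
  ultimately show ?thesis using t q by (intro exI[of _ t] exI[of _ q]) auto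
qed

lemma perturb_A:
  assumes A: "classical A" and r: "r \<in> ZZ" and d: "0 < d" "0 \<le> tp - d" "tp + d < fst r"
    and q: "0 \<le> q" "q < snd r" and ind: "indiff A (tp, q) r"
  shows "\<exists>e>0. \<forall>r'\<in>ZZ. dist r' r < e \<longrightarrow>
           (\<exists>t. tp - d \<le> t \<and> t \<le> tp + d \<and> indiff A (t, q) r' \<and> bless (t, q) r')"
proof -
  have r1: "snd r \<le> 1" using r by (simp add: ZZ_iff')
  have pm: "(tp - d, q) \<in> ZZ" "(tp, q) \<in> ZZ" "(tp + d, q) \<in> ZZ" using d q r1 by (auto simp: ZZ_iff)
  have "strictP A (tp - d, q) (tp, q)" using cl_t[OF A pm(1) pm(2)] d by auto
  then have s1: "strictP A (tp - d, q) r" using strict_trans1[OF A] ind unfolding indiff_def by blast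
  have "strictP A (tp, q) (tp + d, q)" using cl_t[OF A pm(2) pm(3)] d by auto
  then have s2: "strictP A r (tp + d, q)" using strict_trans2[OF A] ind unfolding indiff_def by blast
  obtain e1 where e1: "e1 > 0" "\<forall>y'\<in>ZZ. dist y' r < e1 \<longrightarrow> strictP A (tp - d, q) y'"
    using open_lower[OF A pm(1) r s1] by auto
  obtain e2 where e2: "e2 > 0" "\<forall>y'\<in>ZZ. dist y' r < e2 \<longrightarrow> strictP A y' (tp + d, q)"
    using open_upper[OF A pm(3) r s2] by auto
  define e where "e = min (min e1 e2) (min (fst r - (tp + d)) (snd r - q))"
  have e: "e > 0" using e1 e2 d q unfolding e_def by auto
  show ?thesis
  proof (rule exI[of _ e], intro conjI ballI impI)
    show "0 < e" using e .
  next
    fix r' assume r': "r' \<in> ZZ" "dist r' r < e"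
    have a: "strictP A (tp - d, q) r'" using e1 r' unfolding e_def by auto
    have b: "strictP A r' (tp + d, q)" using e2 r' unfolding e_def by auto
    have "dist (fst r') (fst r) < fst r - (tp + d)" "dist (snd r') (snd r) < snd r - q"
      using dist_fst_le[of r' r] dist_snd_le[of r' r] r' unfolding e_def by auto
    then have c: "tp + d < fst r'" "q < snd r'" by (auto simp: dist_real_def)
    have dd: "tp - d \<le> tp + d" using d by simp
    obtain t where t: "tp - d \<le> t" "t \<le> tp + d" "indiff A (t, q) r'"
      using ivt_t[OF A r'(1) d(2) dd q(1)] a b r1 q unfolding strictP_def by auto
    show "\<exists>t. tp - d \<le> t \<and> t \<le> tp + d \<and> indiff A (t, q) r' \<and> bless (t, q) r'"
      using t c unfolding bless_def by (intro exI[of _ t]) auto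
  qed
qed


lemma WW_connected: "connected WW"
proof -
  have "WW = ({0<..} :: real set) \<times> {0<..1::real}" unfolding WW_def by auto
  moreover have "convex (({0<..} :: real set) \<times> {0<..1::real})"
    by (intro convex_Times convex_real_interval)
  ultimately show ?thesis using convex_connected by auto
qed

lemma crossing:
  assumes A: "classical A" and B: "classical B" and SC: "single_crossing A B"
    and p1: "p1 \<in> ZZ" "r1 \<in> ZZ" "bless p1 r1" "A p1 r1" "B r1 p1"
    and p2: "p2 \<in> ZZ" "r2 \<in> ZZ" "bless p2 r2" "B p2 r2" "A r2 p2"
  shows False
proof -
  define T1 where "T1 = {r \<in> WW. \<exists>p\<in>ZZ. bless p r \<and> A p r \<and> B r p}"
  define T2 where "T2 = {r \<in> WW. \<exists>p\<in>ZZ. bless p r \<and> B p r \<and> A r p}"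
  have inW: "\<And>p r. p \<in> ZZ \<Longrightarrow> r \<in> ZZ \<Longrightarrow> bless p r \<Longrightarrow> r \<in> WW"
    unfolding WW_def ZZ_iff' bless_def by auto
  have r1: "r1 \<in> T1" using p1 inW unfolding T1_def by blast
  have r2: "r2 \<in> T2" using p2 inW unfolding T2_def by blast
  have cov: "WW \<subseteq> T1 \<union> T2"
  proof
    fix r assume r: "r \<in> WW"
    obtain t q where tq: "0 < t" "t < fst r" "0 \<le> q" "q < snd r" "indiff A (t, q) r"
      using exist_indiff[OF A r] by auto
    have rZ: "r \<in> ZZ" using WW_ZZ r .
    have pZ: "(t, q) \<in> ZZ" using tq rZ by (auto simp: ZZ_iff')
    have bl: "bless (t, q) r" using tq unfolding bless_def by auto
    show "r \<in> T1 \<union> T2"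
      using cl_total[OF B pZ rZ] tq pZ bl r unfolding T1_def T2_def indiff_def by blast
  qed
  have disj: "T1 \<inter> T2 = {}"
  proof (rule ccontr)
    assume "T1 \<inter> T2 \<noteq> {}"
    then obtain r where "r \<in> T1" "r \<in> T2" by blast
    then obtain q1 q2 where "q1 \<in> ZZ" "bless q1 r" "A q1 r" "B r q1" "q2 \<in> ZZ" "bless q2 r" "B q2 r" "A r q2"
      "r \<in> WW" unfolding T1_def T2_def by blast
    then show False using per_top[OF A B SC WW_ZZ] by blast
  qed
  have key: "\<And>r. r \<in> WW \<Longrightarrow> \<exists>t q. 0 < t \<and> t < fst r \<and> 0 \<le> q \<and> q < snd r \<and> indiff A (t, q) r
      \<and> (t, q) \<in> ZZ \<and> bless (t, q) r"
  proof -
    fix r assume r: "r \<in> WW"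
    obtain t q where tq: "0 < t" "t < fst r" "0 \<le> q" "q < snd r" "indiff A (t, q) r"
      using exist_indiff[OF A r] by auto
    have rZ: "r \<in> ZZ" using WW_ZZ r .
    have pZ: "(t, q) \<in> ZZ" using tq rZ by (auto simp: ZZ_iff')
    have bl: "bless (t, q) r" using tq unfolding bless_def by auto
    show "?thesis r" using tq pZ bl by blast
  qed
  have open1: "openin (top_of_set WW) T1"
    unfolding openin_euclidean_subtopology_iff
  proof (intro conjI ballI)
    show "T1 \<subseteq> WW" unfolding T1_def by auto
  next
    fix r assume rT: "r \<in> T1"
    then have r: "r \<in> WW" unfolding T1_def by auto
    have rZ: "r \<in> ZZ" using WW_ZZ r .
    obtain tp q where tq: "0 < tp" "tp < fst r" "0 \<le> q" "q < snd r" "indiff A (tp, q) r"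
      "(tp, q) \<in> ZZ" "bless (tp, q) r" using key[OF r] by auto
    have "\<not> B (tp, q) r"
    proof
      assume "B (tp, q) r"
      then have "r \<in> T2" using tq r unfolding T2_def indiff_def by blast
      then show False using rT disj by blast
    qed
    then have sB: "strictP B r (tp, q)" using cl_total[OF B tq(6) rZ] unfolding strictP_def by auto
    obtain e1 where e1: "e1 > 0" "\<forall>y'\<in>ZZ. dist y' (tp, q) < e1 \<longrightarrow> strictP B r y'"
      using open_lower[OF B rZ tq(6) sB] by auto
    define d where "d = min (e1/2) (min (tp/2) ((fst r - tp)/2))"
    have dl1: "d \<le> e1/2" unfolding d_def by (rule min.cobounded1)
    have dl2: "d \<le> tp/2" unfolding d_def by (rule min.coboundedI2[OF min.cobounded1])
    have dl3: "d \<le> (fst r - tp)/2" unfolding d_def by (rule min.coboundedI2[OF min.cobounded2])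
    have dl4: "0 < d" unfolding d_def using e1 tq by auto
    note dl = dl1 dl2 dl3 dl4
    have d0: "0 \<le> tp - d" using dl2 tq(1) by linarith
    have d1: "tp + d < fst r" using dl3 tq(2) by (simp add: field_simps)
    have d2: "d < e1" using dl1 e1(1) by linarith
    note d = dl4 d0 d1 d2
    have pmZ: "(tp - d, q) \<in> ZZ" using d tq by (auto simp: ZZ_iff)
    have "dist (tp - d, q) (tp, q) = d" using d by (simp add: dist_Pair_Pair dist_real_def)
    then have s1: "strictP B r (tp - d, q)" using e1 pmZ d by auto
    obtain e4 where e4: "e4 > 0" "\<forall>y'\<in>ZZ. dist y' r < e4 \<longrightarrow> strictP B y' (tp - d, q)"
      using open_upper[OF B pmZ rZ s1] by auto
    obtain e5 where e5: "e5 > 0" "\<forall>r'\<in>ZZ. dist r' r < e5 \<longrightarrow>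
           (\<exists>t. tp - d \<le> t \<and> t \<le> tp + d \<and> indiff A (t, q) r' \<and> bless (t, q) r')"
      using perturb_A[OF A rZ d(1-3) tq(3,4,5)] by auto
    show "\<exists>e>0. \<forall>x'\<in>WW. dist x' r < e \<longrightarrow> x' \<in> T1"
    proof (rule exI[of _ "min e4 e5"], intro conjI ballI impI)
      show "0 < min e4 e5" using e4 e5 by auto
    next
      fix r' assume r': "r' \<in> WW" "dist r' r < min e4 e5"
      have r'Z: "r' \<in> ZZ" using WW_ZZ r'(1) .
      obtain t where t: "tp - d \<le> t" "t \<le> tp + d" "indiff A (t, q) r'" "bless (t, q) r'"
        using e5 r'Z r' by auto
      have tZ: "(t, q) \<in> ZZ" using t d tq by (auto simp: ZZ_iff)
      have "B (tp - d, q) (t, q)" using cl_dom_weak[OF B pmZ tZ] t by auto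
      moreover have "B r' (tp - d, q)" using e4 r'Z r' unfolding strictP_def by auto
      ultimately have "B r' (t, q)" using cl_trans[OF B] by blast
      then show "r' \<in> T1" using t tZ r' unfolding T1_def indiff_def by blast
    qed
  qed
  have open2: "openin (top_of_set WW) T2"
    unfolding openin_euclidean_subtopology_iff
  proof (intro conjI ballI)
    show "T2 \<subseteq> WW" unfolding T2_def by auto
  next
    fix r assume rT: "r \<in> T2"
    then have r: "r \<in> WW" unfolding T2_def by auto
    have rZ: "r \<in> ZZ" using WW_ZZ r .
    obtain tp q where tq: "0 < tp" "tp < fst r" "0 \<le> q" "q < snd r" "indiff A (tp, q) r"
      "(tp, q) \<in> ZZ" "bless (tp, q) r" using key[OF r] by auto
    have "\<not> B r (tp, q)"
    proof
      assume "B r (tp, q)"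
      then have "r \<in> T1" using tq r unfolding T1_def indiff_def by blast
      then show False using rT disj by blast
    qed
    then have sB: "strictP B (tp, q) r" using cl_total[OF B tq(6) rZ] unfolding strictP_def by auto
    obtain e1 where e1: "e1 > 0" "\<forall>y'\<in>ZZ. dist y' (tp, q) < e1 \<longrightarrow> strictP B y' r"
      using open_upper[OF B rZ tq(6) sB] by auto
    define d where "d = min (e1/2) (min (tp/2) ((fst r - tp)/2))"
    have dl1: "d \<le> e1/2" unfolding d_def by (rule min.cobounded1)
    have dl2: "d \<le> tp/2" unfolding d_def by (rule min.coboundedI2[OF min.cobounded1])
    have dl3: "d \<le> (fst r - tp)/2" unfolding d_def by (rule min.coboundedI2[OF min.cobounded2])
    have dl4: "0 < d" unfolding d_def using e1 tq by auto
    note dl = dl1 dl2 dl3 dl4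
    have d0: "0 \<le> tp - d" using dl2 tq(1) by linarith
    have d1: "tp + d < fst r" using dl3 tq(2) by (simp add: field_simps)
    have d2: "d < e1" using dl1 e1(1) by linarith
    note d = dl4 d0 d1 d2
    have ppZ: "(tp + d, q) \<in> ZZ" using d tq by (auto simp: ZZ_iff)
    have "dist (tp + d, q) (tp, q) = d" using d by (simp add: dist_Pair_Pair dist_real_def)
    then have s1: "strictP B (tp + d, q) r" using e1 ppZ d by auto
    obtain e4 where e4: "e4 > 0" "\<forall>y'\<in>ZZ. dist y' r < e4 \<longrightarrow> strictP B (tp + d, q) y'"
      using open_lower[OF B ppZ rZ s1] by auto
    obtain e5 where e5: "e5 > 0" "\<forall>r'\<in>ZZ. dist r' r < e5 \<longrightarrow>
           (\<exists>t. tp - d \<le> t \<and> t \<le> tp + d \<and> indiff A (t, q) r' \<and> bless (t, q) r')"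
      using perturb_A[OF A rZ d(1-3) tq(3,4,5)] by auto
    show "\<exists>e>0. \<forall>x'\<in>WW. dist x' r < e \<longrightarrow> x' \<in> T2"
    proof (rule exI[of _ "min e4 e5"], intro conjI ballI impI)
      show "0 < min e4 e5" using e4 e5 by auto
    next
      fix r' assume r': "r' \<in> WW" "dist r' r < min e4 e5"
      have r'Z: "r' \<in> ZZ" using WW_ZZ r'(1) .
      obtain t where t: "tp - d \<le> t" "t \<le> tp + d" "indiff A (t, q) r'" "bless (t, q) r'"
        using e5 r'Z r' by auto
      have tZ: "(t, q) \<in> ZZ" using t d tq by (auto simp: ZZ_iff)
      have "B (t, q) (tp + d, q)" using cl_dom_weak[OF B tZ ppZ] t by auto
      moreover have "B (tp + d, q) r'" using e4 r'Z r' unfolding strictP_def by auto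
      ultimately have "B (t, q) r'" using cl_trans[OF B] by blast
      then show "r' \<in> T2" using t tZ r' unfolding T2_def indiff_def by blast
    qed
  qed
  show False using WW_connected open1 open2 cov disj r1 r2 unfolding connected_openin by blast
qed


lemma pert:
  assumes R: "classical R" and x: "x \<in> ZZ" and y: "y \<in> ZZ" and s: "strictP R y x" and b: "bless y x"
  shows "\<exists>d>0. bless (fst y + d, snd y) x \<and> (fst y + d, snd y) \<in> ZZ \<and> strictP R (fst y + d, snd y) x"
proof -
  obtain e where e: "e > 0" "\<forall>y'\<in>ZZ. dist y' y < e \<longrightarrow> strictP R y' x"
    using open_upper[OF R x y s] by auto
  define d where "d = min (e/2) ((fst x - fst y)/2)"
  have dl1: "d \<le> e/2" unfolding d_def by (rule min.cobounded1)
  have dl2: "d \<le> (fst x - fst y)/2" unfolding d_def by (rule min.cobounded2)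
  have dl3: "0 < d" unfolding d_def using e b by (auto simp: bless_def)
  have yy: "0 \<le> fst y" "0 \<le> snd y" "snd y \<le> 1" using y by (auto simp: ZZ_iff')
  have zz: "(fst y + d, snd y) \<in> ZZ" using yy dl3 by (simp add: ZZ_iff)
  have "dist (fst y + d, snd y) y = d" using dl3 by (cases y) (simp add: dist_Pair_Pair dist_real_def)
  also have "\<dots> < e" using dl1 e(1) by (simp add: field_simps)
  finally have "strictP R (fst y + d, snd y) x" using e(2) zz by auto
  moreover have "bless (fst y + d, snd y) x" using b dl2 unfolding bless_def by (simp add: field_simps)
  ultimately show ?thesis using dl3 zz by blast
qed

lemma box_mem: "x \<in> ZZ \<Longrightarrow> bleq x z \<Longrightarrow> x \<in> box z" unfolding box_def by auto

lemma prec_box: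
  assumes "prec A B" "z \<in> ZZ" "x \<in> ZZ" "bleq x z" "B x z"
  shows "A x z"
  using assms unfolding prec_def box_def by blast

lemma mono2:
  assumes A: "classical A" and B: "classical B" and p: "prec A B"
    and x: "x \<in> ZZ" and y: "y \<in> ZZ" and b: "bless y x" and a: "A x y"
  shows "B x y"
proof (rule ccontr)
  assume "\<not> B x y"
  then have s: "strictP B y x" using cl_total[OF B x y] unfolding strictP_def by auto
  obtain d where d: "d > 0" "bless (fst y + d, snd y) x" "(fst y + d, snd y) \<in> ZZ"
    "strictP B (fst y + d, snd y) x" using pert[OF B x y s b] by auto
  have "A (fst y + d, snd y) x"
    using prec_box[OF p x d(3)] d unfolding bleq_def strictP_def by auto
  then have "A (fst y + d, snd y) y" using cl_trans[OF A _ a] by blast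
  moreover have "strictP A y (fst y + d, snd y)"
  proof -
    have yz: "(fst y, snd y) \<in> ZZ" using y by simp
    show ?thesis using cl_t[OF A yz d(3)] d(1) by simp
  qed
  ultimately show False unfolding strictP_def by simp
qed

lemma not_bless_dom:
  "\<not> bless x y \<Longrightarrow> \<not> bless y x \<Longrightarrow>
   (fst x \<le> fst y \<and> snd y \<le> snd x) \<or> (fst y \<le> fst x \<and> snd x \<le> snd y)"
  unfolding bless_def by auto

lemma prec_antisym:
  assumes A: "classical A" and B: "classical B" and p: "prec A B" and p2: "prec B A"
  shows False
proof -
  have imp: "\<And>A B x y. classical A \<Longrightarrow> classical B \<Longrightarrow> prec A B \<Longrightarrow> prec B A \<Longrightarrow> A x y \<Longrightarrow> B x y"
  proof -
    fix A B x y assume A: "classical A" and B: "classical B" and p: "prec A B" and p2: "prec B A"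
      and a: "A x y"
    have x: "x \<in> ZZ" and y: "y \<in> ZZ" using cl_ZZ[OF A a] by auto
    consider "x = y" | "bless x y" | "bless y x" | "\<not> bless x y \<and> \<not> bless y x \<and> x \<noteq> y" by blast
    then show "B x y"
    proof cases
      case 1 then show ?thesis using cl_refl[OF B x] by simp
    next
      case 2 then show ?thesis using prec_box[OF p2 y x] a unfolding bleq_def by blast
    next
      case 3 then show ?thesis using mono2[OF A B p x y _ a] by blast
    next
      case 4
      then consider "fst x \<le> fst y \<and> snd y \<le> snd x" | "fst y \<le> fst x \<and> snd x \<le> snd y"
        using not_bless_dom by blast
      then show ?thesis
      proof cases
        case 1 then show ?thesis using cl_dom_weak[OF B x y] by auto
      next
        case 2 then have "strictP A y x" using cl_dom[OF A y x] 4 by auto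
        then show ?thesis using a unfolding strictP_def by auto
      qed
    qed
  qed
  have "A = B"
  proof (intro ext iffI)
    fix x y assume "A x y" then show "B x y" using imp[OF A B p p2] by blast
  next
    fix x y assume "B x y" then show "A x y" using imp[OF B A p2 p] by blast
  qed
  then show False using p unfolding prec_def by auto
qed

lemma prec_trans:
  assumes A: "classical A" and B: "classical B" and C: "classical C"
    and "prec A B" "prec B C"
  shows "prec A C"
proof -
  have "A \<noteq> C"
  proof
    assume "A = C" then show False using prec_antisym[OF A B] assms by auto
  qed
  then show ?thesis using assms unfolding prec_def by blast
qed

lemma preceq_trans:
  assumes "classical A" "classical B" "classical C" "preceq A B" "preceq B C"
  shows "preceq A C"
  using assms prec_trans unfolding preceq_def by blast

lemma prec_total:
  assumes D: "rich_single_crossing D" and A: "A \<in> D" and B: "B \<in> D" and ne: "A \<noteq> B"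
  shows "prec A B \<or> prec B A"
proof (rule ccontr)
  assume n: "\<not> (prec A B \<or> prec B A)"
  have Ac: "classical A" and Bc: "classical B" using D A B unfolding rich_single_crossing_def by auto
  have SC: "single_crossing A B" using D A B ne unfolding rich_single_crossing_def by auto
  obtain z x where zx: "z \<in> ZZ" "x \<in> ZZ" "bleq x z" "B x z" "\<not> A x z"
    using n ne unfolding prec_def box_def by blast
  have "x \<noteq> z" using zx cl_refl[OF Ac zx(1)] by auto
  then have bx: "bless x z" using zx unfolding bleq_def by auto
  have Azx: "A z x" using cl_total[OF Ac zx(1) zx(2)] zx by auto
  obtain y w where yw: "y \<in> ZZ" "w \<in> ZZ" "bleq w y" "A w y" "\<not> B w y"
    using n ne unfolding prec_def box_def by blast
  have "w \<noteq> y" using yw cl_refl[OF Bc yw(1)] by auto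
  then have bw: "bless w y" using yw unfolding bleq_def by auto
  have Byw: "B y w" using cl_total[OF Bc yw(1) yw(2)] yw by auto
  show False using crossing[OF Ac Bc SC yw(2) yw(1) bw yw(4) Byw zx(2) zx(1) bx zx(4) Azx] .
qed


lemma ord3:
  assumes R1: "classical R1" and R2: "classical R2" and x1: "x1 \<in> ZZ" and x2: "x2 \<in> ZZ"
    and a: "R1 x1 x2" and b: "R2 x2 x1"
  shows "x1 = x2 \<or> bless x1 x2 \<or> bless x2 x1"
proof (rule ccontr)
  assume n: "\<not> (x1 = x2 \<or> bless x1 x2 \<or> bless x2 x1)"
  then consider "fst x1 \<le> fst x2 \<and> snd x2 \<le> snd x1" | "fst x2 \<le> fst x1 \<and> snd x1 \<le> snd x2"
    using not_bless_dom by blast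
  then show False
  proof cases
    case 1 then have "strictP R2 x1 x2" using cl_dom[OF R2 x1 x2] n by auto
    then show False using b unfolding strictP_def by auto
  next
    case 2 then have "strictP R1 x2 x1" using cl_dom[OF R1 x2 x1] n by auto
    then show False using a unfolding strictP_def by auto
  qed
qed

lemma rsc_cl: "rich_single_crossing D \<Longrightarrow> R \<in> D \<Longrightarrow> classical R"
  unfolding rich_single_crossing_def by auto
lemma rsc_sc: "rich_single_crossing D \<Longrightarrow> R1 \<in> D \<Longrightarrow> R2 \<in> D \<Longrightarrow> R1 \<noteq> R2 \<Longrightarrow> single_crossing R1 R2"
  unfolding rich_single_crossing_def by auto
lemma rsc_rich: "rich_single_crossing D \<Longrightarrow> x1 \<in> ZZ \<Longrightarrow> x2 \<in> ZZ \<Longrightarrow> bless x1 x2 \<Longrightarrow> \<exists>R\<in>D. indiff R x1 x2"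
  unfolding rich_single_crossing_def by auto

lemma sp: "strategy_proof D F \<Longrightarrow> R1 \<in> D \<Longrightarrow> R2 \<in> D \<Longrightarrow> R1 (F R1) (F R2)"
  unfolding strategy_proof_def by auto

lemma mono_F:
  assumes D: "rich_single_crossing D" and FZ: "\<forall>R\<in>D. F R \<in> ZZ" and SP: "strategy_proof D F"
    and R1: "R1 \<in> D" and R2: "R2 \<in> D" and p: "prec R1 R2"
  shows "bleq (F R1) (F R2)"
proof -
  have c1: "classical R1" and c2: "classical R2" using rsc_cl[OF D] R1 R2 by auto
  have x1: "F R1 \<in> ZZ" and x2: "F R2 \<in> ZZ" using FZ R1 R2 by auto
  have a: "R1 (F R1) (F R2)" and b: "R2 (F R2) (F R1)" using sp[OF SP] R1 R2 by auto
  have ne: "R1 \<noteq> R2" using p unfolding prec_def by auto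
  have "\<not> bless (F R2) (F R1)"
  proof
    assume bl: "bless (F R2) (F R1)"
    have "R2 (F R1) (F R2)" using mono2[OF c1 c2 p x1 x2 bl a] .
    moreover have "R1 (F R2) (F R1)" using prec_box[OF p x1 x2 _ b] bl unfolding bleq_def by auto
    ultimately have "F R2 = F R1"
      using sc_noboth[OF rsc_sc[OF D R1 R2 ne] c1 c2 x2 x1] a b unfolding indiff_def by auto
    then show False using bl unfolding bless_def by auto
  qed
  then show ?thesis using ord3[OF c1 c2 x1 x2 a b] unfolding bleq_def by auto
qed

lemma mono_F_eq:
  assumes D: "rich_single_crossing D" and FZ: "\<forall>R\<in>D. F R \<in> ZZ" and SP: "strategy_proof D F"
    and R1: "R1 \<in> D" and R2: "R2 \<in> D" and p: "preceq R1 R2"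
  shows "bleq (F R1) (F R2)"
  using mono_F[OF D FZ SP R1 R2] p unfolding preceq_def bleq_def by auto

lemma bleq_fst: "bleq x y \<Longrightarrow> fst x \<le> fst y" unfolding bleq_def bless_def by auto
lemma bleq_snd: "bleq x y \<Longrightarrow> snd x \<le> snd y" unfolding bleq_def bless_def by auto

lemma ordered_F:
  assumes D: "rich_single_crossing D" and FZ: "\<forall>R\<in>D. F R \<in> ZZ" and SP: "strategy_proof D F"
  shows "ordered_range D F"
  unfolding ordered_range_def
proof (intro ballI impI)
  fix x y assume "x \<in> F ` D" "y \<in> F ` D" "x \<noteq> y"
  then obtain R1 R2 where "R1 \<in> D" "R2 \<in> D" "x = F R1" "y = F R2" by auto
  then show "bless x y \<or> bless y x"
    using ord3[OF rsc_cl[OF D] rsc_cl[OF D], of R1 R2 x y] FZ sp[OF SP] \<open>x \<noteq> y\<close> by auto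
qed


lemma chain_inc:
  assumes D: "rich_single_crossing D" and Rs: "\<forall>n. Rs n \<in> D"
    and inc: "\<forall>n. preceq (Rs n) (Rs (Suc n))" and nm: "n \<le> m"
  shows "preceq (Rs n) (Rs m)"
proof -
  have "\<And>k. preceq (Rs n) (Rs (n + k))"
  proof -
    fix k show "preceq (Rs n) (Rs (n + k))"
    proof (induction k)
      case 0 then show ?case unfolding preceq_def by simp
    next
      case (Suc k)
      then show ?case using preceq_trans[OF rsc_cl[OF D] rsc_cl[OF D] rsc_cl[OF D] Suc inc[rule_format, of "n + k"]] Rs
        by simp
    qed
  qed
  from this[of "m - n"] show ?thesis using nm by simp
qed

lemma chain_dec:
  assumes D: "rich_single_crossing D" and Rs: "\<forall>n. Rs n \<in> D"
    and dec: "\<forall>n. preceq (Rs (Suc n)) (Rs n)" and nm: "n \<le> m"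
  shows "preceq (Rs m) (Rs n)"
proof -
  have "\<And>k. preceq (Rs (n + k)) (Rs n)"
  proof -
    fix k show "preceq (Rs (n + k)) (Rs n)"
    proof (induction k)
      case 0 then show ?case unfolding preceq_def by simp
    next
      case (Suc k)
      then show ?case using preceq_trans[OF rsc_cl[OF D] rsc_cl[OF D] rsc_cl[OF D] dec[rule_format, of "n + k"] Suc] Rs
        by simp
    qed
  qed
  from this[of "m - n"] show ?thesis using nm by simp
qed

lemma cont_inc:
  assumes D: "rich_single_crossing D" and FZ: "\<forall>R\<in>D. F R \<in> ZZ" and SP: "strategy_proof D F"
    and R: "R \<in> D" and Rs: "\<forall>n. Rs n \<in> D" and inc: "\<forall>n. preceq (Rs n) (Rs (Suc n))"
    and oc: "order_conv D Rs R"
  shows "\<exists>L. (\<lambda>n. F (Rs n)) \<longlonglongrightarrow> L \<and> indiff R L (F R)"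
proof -
  have cl: "\<And>A. A \<in> D \<Longrightarrow> classical A" using rsc_cl[OF D] .
  have cR: "classical R" using cl R .
  have le: "\<And>n m. n \<le> m \<Longrightarrow> preceq (Rs n) (Rs m)" using chain_inc[OF D Rs inc] .
  have below: "\<And>n. preceq (Rs n) R"
  proof (rule ccontr)
    fix n assume nb: "\<not> preceq (Rs n) R"
    then have "prec R (Rs n)" using prec_total[OF D Rs[rule_format, of n] R] unfolding preceq_def by auto
    then obtain N where N: "\<forall>m\<ge>N. prec (Rs m) (Rs n)" using oc Rs unfolding order_conv_def by blast
    define m where "m = max N n"
    have p1: "prec (Rs m) (Rs n)" using N unfolding m_def by auto
    have p2: "preceq (Rs n) (Rs m)" using le unfolding m_def by auto
    show False
    proof (cases "Rs n = Rs m")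
      case True then show False using p1 unfolding prec_def by auto
    next
      case False then have "prec (Rs n) (Rs m)" using p2 unfolding preceq_def by auto
      then show False using prec_antisym[OF cl cl p1] Rs by auto
    qed
  qed
  define x where "x = (\<lambda>n. F (Rs n))"
  define z where "z = F R"
  have zZ: "z \<in> ZZ" using FZ R unfolding z_def by auto
  have xZ: "\<And>n. x n \<in> ZZ" using FZ Rs unfolding x_def by auto
  have xx: "\<And>n m. n \<le> m \<Longrightarrow> bleq (x n) (x m)"
    using mono_F_eq[OF D FZ SP] Rs le unfolding x_def by blast
  have xz: "\<And>n. bleq (x n) z" using mono_F_eq[OF D FZ SP] Rs R below unfolding x_def z_def by blast
  have i1: "incseq (\<lambda>n. fst (x n))" unfolding incseq_def using xx bleq_fst by blast
  have i2: "incseq (\<lambda>n. snd (x n))" unfolding incseq_def using xx bleq_snd by blast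
  obtain a where a: "(\<lambda>n. fst (x n)) \<longlonglongrightarrow> a" "\<forall>i. fst (x i) \<le> a"
    using incseq_convergent[OF i1, of "fst z"] xz bleq_fst by blast
  obtain b where b: "(\<lambda>n. snd (x n)) \<longlonglongrightarrow> b" "\<forall>i. snd (x i) \<le> b"
    using incseq_convergent[OF i2, of "snd z"] xz bleq_snd by blast
  have az: "a \<le> fst z" using LIMSEQ_le_const2[OF a(1)] xz bleq_fst by blast
  have bz: "b \<le> snd z" using LIMSEQ_le_const2[OF b(1)] xz bleq_snd by blast
  define L where "L = (a, b)"
  have xL: "x \<longlonglongrightarrow> L"
    using tendsto_Pair[OF a(1) b(1)] unfolding L_def by simp
  have LZ: "L \<in> ZZ" using a(2) b(2) xZ[of 0] bz zZ unfolding L_def ZZ_iff' by (auto intro: order_trans)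
  have RzL: "R z L"
  proof -
    have "\<And>n. x n \<in> {y \<in> ZZ. R z y}" using sp[OF SP R] Rs xZ unfolding x_def z_def by auto
    then show ?thesis using closed_sequentially[OF cl_closed2[OF cR zZ] _ xL] by auto
  qed
  have sub: "\<And>A. A \<in> D \<Longrightarrow> prec A R \<Longrightarrow> A L z"
  proof -
    fix A assume A: "A \<in> D" and pA: "prec A R"
    obtain N where N: "\<forall>n\<ge>N. prec A (Rs n)" using oc A pA unfolding order_conv_def by blast
    have "\<And>n. x (n + N) \<in> {y \<in> ZZ. A y z}"
    proof -
      fix n
      have "Rs (n + N) (x (n + N)) z" using sp[OF SP] Rs R unfolding x_def z_def by auto
      then have "A (x (n + N)) z" using prec_box[OF N[rule_format, of "n + N"] zZ xZ xz] by auto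
      then show "x (n + N) \<in> {y \<in> ZZ. A y z}" using xZ by auto
    qed
    then show "A L z"
      using closed_sequentially[OF cl_closed1[OF cl[OF A] zZ] _ LIMSEQ_ignore_initial_segment[OF xL]] by auto
  qed
  have "R L z"
  proof (rule ccontr)
    assume nR: "\<not> R L z"
    have Lz: "L \<noteq> z" using nR cl_refl[OF cR zZ] by auto
    have sRzL: "strictP R z L" using nR RzL unfolding strictP_def by auto
    have exA: "\<exists>A\<in>D. prec A R"
    proof (cases "\<exists>n. Rs n \<noteq> R")
      case True then show ?thesis using below Rs unfolding preceq_def by auto
    next
      case False
      then have "x = (\<lambda>n. z)" unfolding x_def z_def by auto
      then have "(\<lambda>n. z) \<longlonglongrightarrow> L" using xL by simp
      then have "L = z" unfolding LIMSEQ_const_iff by simp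
      then show ?thesis using Lz by auto
    qed
    then obtain A where A: "A \<in> D" "prec A R" by auto
    consider "a = fst z" | "b = snd z" "a < fst z" | "a < fst z" "b < snd z" using az bz by linarith
    then show False
    proof cases
      case 1
      then have "strictP A z L" using cl_dom[OF cl[OF A(1)] zZ LZ] Lz bz unfolding L_def by auto
      then show False using sub[OF A] unfolding strictP_def by auto
    next
      case 2
      then have "strictP R L z" using cl_dom[OF cR LZ zZ] Lz az unfolding L_def by auto
      then show False using nR unfolding strictP_def by auto
    next
      case 3
      obtain e where e: "e > 0" "\<forall>y'\<in>ZZ. dist y' L < e \<longrightarrow> strictP R z y'"
        using open_lower[OF cR zZ LZ sRzL] by auto
      define d where "d = min (e/2) ((snd z - b)/2)"
      have dl1: "d \<le> e/2" unfolding d_def by (rule min.cobounded1)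
      have dl2: "d \<le> (snd z - b)/2" unfolding d_def by (rule min.cobounded2)
      have dl3: "0 < d" unfolding d_def using e 3 by auto
      have d1: "b + d < snd z" using dl2 3 by (simp add: field_simps)
      have d2: "d < e" using dl1 e(1) by (simp add: field_simps)
      define w where "w = (a, b + d)"
      have wZ: "w \<in> ZZ" using LZ d1 dl3 zZ unfolding w_def L_def ZZ_iff' by auto
      have "dist w L = d" unfolding w_def L_def using dl3 by (simp add: dist_Pair_Pair dist_real_def)
      then have sw: "strictP R z w" using e wZ d2 by auto
      have bw: "bless w z" using 3 d1 unfolding w_def bless_def by auto
      obtain A' where A': "A' \<in> D" "indiff A' w z" using rsc_rich[OF D wZ zZ bw] by auto
      have ne: "A' \<noteq> R" using A' sw unfolding indiff_def strictP_def by auto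
      consider "prec A' R" | "prec R A'" using prec_total[OF D A'(1) R ne] by auto
      then show False
      proof cases
        case 1
        have "A' L z" using sub[OF A'(1) 1] .
        then have "A' L w" using cl_trans[OF cl[OF A'(1)]] A'(2) unfolding indiff_def by blast
        moreover have "strictP A' w L"
          using cl_q[OF cl[OF A'(1)], of a b "b + d"] LZ wZ dl3 unfolding w_def L_def by auto
        ultimately show False unfolding strictP_def by auto
      next
        case 2
        have "R w z" using prec_box[OF 2 zZ wZ _] A'(2) bw unfolding indiff_def bleq_def by auto
        then show False using sw unfolding strictP_def by auto
      qed
    qed
  qed
  then show ?thesis using xL RzL unfolding x_def z_def indiff_def by blast
qed


lemma cont_dec:
  assumes D: "rich_single_crossing D" and FZ: "\<forall>R\<in>D. F R \<in> ZZ" and SP: "strategy_proof D F"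
    and R: "R \<in> D" and Rs: "\<forall>n. Rs n \<in> D" and dec: "\<forall>n. preceq (Rs (Suc n)) (Rs n)"
    and oc: "order_conv D Rs R"
  shows "\<exists>L. (\<lambda>n. F (Rs n)) \<longlonglongrightarrow> L \<and> indiff R L (F R)"
proof -
  have cl: "\<And>A. A \<in> D \<Longrightarrow> classical A" using rsc_cl[OF D] .
  have cR: "classical R" using cl R .
  have le: "\<And>n m. n \<le> m \<Longrightarrow> preceq (Rs m) (Rs n)" using chain_dec[OF D Rs dec] .
  have above: "\<And>n. preceq R (Rs n)"
  proof (rule ccontr)
    fix n assume nb: "\<not> preceq R (Rs n)"
    then have "prec (Rs n) R" using prec_total[OF D Rs[rule_format, of n] R] unfolding preceq_def by auto
    then obtain N where N: "\<forall>m\<ge>N. prec (Rs n) (Rs m)" using oc Rs unfolding order_conv_def by blast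
    define m where "m = max N n"
    have p1: "prec (Rs n) (Rs m)" using N unfolding m_def by auto
    have p2: "preceq (Rs m) (Rs n)" using le unfolding m_def by auto
    show False
    proof (cases "Rs n = Rs m")
      case True then show False using p1 unfolding prec_def by auto
    next
      case False then have "prec (Rs m) (Rs n)" using p2 unfolding preceq_def by auto
      then show False using prec_antisym[OF cl cl p1] Rs by auto
    qed
  qed
  define x where "x = (\<lambda>n. F (Rs n))"
  define z where "z = F R"
  have zZ: "z \<in> ZZ" using FZ R unfolding z_def by auto
  have xZ: "\<And>n. x n \<in> ZZ" using FZ Rs unfolding x_def by auto
  have xx: "\<And>n m. n \<le> m \<Longrightarrow> bleq (x m) (x n)"
    using mono_F_eq[OF D FZ SP] Rs le unfolding x_def by blast
  have zx: "\<And>n. bleq z (x n)" using mono_F_eq[OF D FZ SP] Rs R above unfolding x_def z_def by blast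
  have i1: "decseq (\<lambda>n. fst (x n))" unfolding decseq_def using xx bleq_fst by blast
  have i2: "decseq (\<lambda>n. snd (x n))" unfolding decseq_def using xx bleq_snd by blast
  obtain a where a: "(\<lambda>n. fst (x n)) \<longlonglongrightarrow> a" "\<forall>i. a \<le> fst (x i)"
    using decseq_convergent[OF i1, of "fst z"] zx bleq_fst by blast
  obtain b where b: "(\<lambda>n. snd (x n)) \<longlonglongrightarrow> b" "\<forall>i. b \<le> snd (x i)"
    using decseq_convergent[OF i2, of "snd z"] zx bleq_snd by blast
  have az: "fst z \<le> a" using LIMSEQ_le_const[OF a(1)] zx bleq_fst by blast
  have bz: "snd z \<le> b" using LIMSEQ_le_const[OF b(1)] zx bleq_snd by blast
  define L where "L = (a, b)"
  have xL: "x \<longlonglongrightarrow> L"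
    using tendsto_Pair[OF a(1) b(1)] unfolding L_def by simp
  have LZ: "L \<in> ZZ" using az bz b(2) xZ[of 0] zZ unfolding L_def ZZ_iff' by (auto intro: order_trans)
  have RzL: "R z L"
  proof -
    have "\<And>n. x n \<in> {y \<in> ZZ. R z y}" using sp[OF SP R] Rs xZ unfolding x_def z_def by auto
    then show ?thesis using closed_sequentially[OF cl_closed2[OF cR zZ] _ xL] by auto
  qed
  have sub: "\<And>B. B \<in> D \<Longrightarrow> prec R B \<Longrightarrow> B L z"
  proof -
    fix B assume B: "B \<in> D" and pB: "prec R B"
    obtain N where N: "\<forall>n\<ge>N. prec (Rs n) B" using oc B pB unfolding order_conv_def by blast
    have "\<And>n. x (n + N) \<in> {y \<in> ZZ. B y z}"
    proof -
      fix n
      have r: "Rs (n + N) (x (n + N)) z" using sp[OF SP] Rs R unfolding x_def z_def by auto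
      have "B (x (n + N)) z"
      proof (cases "z = x (n + N)")
        case True then show ?thesis using cl_refl[OF cl[OF B] zZ] by simp
      next
        case False
        then have "bless z (x (n + N))" using zx[of "n + N"] unfolding bleq_def by auto
        then show ?thesis using mono2[OF cl cl N[rule_format, of "n + N"] xZ zZ _ r] Rs B by auto
      qed
      then show "x (n + N) \<in> {y \<in> ZZ. B y z}" using xZ by auto
    qed
    then show "B L z"
      using closed_sequentially[OF cl_closed1[OF cl[OF B] zZ] _ LIMSEQ_ignore_initial_segment[OF xL]] by auto
  qed
  have "R L z"
  proof (rule ccontr)
    assume nR: "\<not> R L z"
    have Lz: "L \<noteq> z" using nR cl_refl[OF cR zZ] by auto
    have sRzL: "strictP R z L" using nR RzL unfolding strictP_def by auto
    have exB: "\<exists>B\<in>D. prec R B"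
    proof (cases "\<exists>n. Rs n \<noteq> R")
      case True then show ?thesis using above Rs unfolding preceq_def by auto
    next
      case False
      then have "x = (\<lambda>n. z)" unfolding x_def z_def by auto
      then have "(\<lambda>n. z) \<longlonglongrightarrow> L" using xL by simp
      then have "L = z" unfolding LIMSEQ_const_iff by simp
      then show ?thesis using Lz by auto
    qed
    then obtain B where B: "B \<in> D" "prec R B" by auto
    consider "a = fst z" | "b = snd z" "fst z < a" | "fst z < a" "snd z < b" using az bz by linarith
    then show False
    proof cases
      case 1
      then have "strictP R L z" using cl_dom[OF cR LZ zZ] Lz bz unfolding L_def by auto
      then show False using nR unfolding strictP_def by auto
    next
      case 2
      then have "strictP B z L" using cl_dom[OF cl[OF B(1)] zZ LZ] Lz az unfolding L_def by auto
      then show False using sub[OF B] unfolding strictP_def by auto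
    next
      case 3
      obtain e where e: "e > 0" "\<forall>y'\<in>ZZ. dist y' L < e \<longrightarrow> strictP R z y'"
        using open_lower[OF cR zZ LZ sRzL] by auto
      define d where "d = min (e/2) ((a - fst z)/2)"
      have dl1: "d \<le> e/2" unfolding d_def by (rule min.cobounded1)
      have dl2: "d \<le> (a - fst z)/2" unfolding d_def by (rule min.cobounded2)
      have dl3: "0 < d" unfolding d_def using e 3 by auto
      have d1: "fst z < a - d" using dl2 3 by (simp add: field_simps)
      have d2: "d < e" using dl1 e(1) by (simp add: field_simps)
      define w where "w = (a - d, b)"
      have wZ: "w \<in> ZZ" using LZ d1 zZ unfolding w_def L_def ZZ_iff' by auto
      have "dist w L = d" unfolding w_def L_def using dl3 by (simp add: dist_Pair_Pair dist_real_def)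
      then have sw: "strictP R z w" using e wZ d2 by auto
      have bw: "bless z w" using 3 d1 unfolding w_def bless_def by auto
      obtain B' where B': "B' \<in> D" "indiff B' z w" using rsc_rich[OF D zZ wZ bw] by auto
      have ne: "B' \<noteq> R" using B' sw unfolding indiff_def strictP_def by auto
      consider "prec B' R" | "prec R B'" using prec_total[OF D B'(1) R ne] by auto
      then show False
      proof cases
        case 1
        have "R w z" using mono2[OF cl[OF B'(1)] cR 1 wZ zZ bw] B'(2) unfolding indiff_def by auto
        then show False using sw unfolding strictP_def by auto
      next
        case 2
        have "B' L z" using sub[OF B'(1) 2] .
        then have "B' L w" using cl_trans[OF cl[OF B'(1)]] B'(2) unfolding indiff_def by blast
        moreover have "strictP B' w L"
          using cl_t[OF cl[OF B'(1)], of "a - d" b a] LZ wZ dl3 unfolding w_def L_def by auto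
        ultimately show False unfolding strictP_def by auto
      qed
    qed
  qed
  then show ?thesis using xL RzL unfolding x_def z_def indiff_def by blast
qed

theorem mainTheorem7:
  fixes D :: "pref set" and F :: "pref \<Rightarrow> bndl"
  assumes "rich_single_crossing D"
    and "\<forall>R\<in>D. F R \<in> ZZ"
    and "strategy_proof D F"
  shows "monotone_mech D F \<and> VF_continuous D F \<and> locally_sp_in_range D F"
proof (intro conjI)
  show "monotone_mech D F" unfolding monotone_mech_def using mono_F[OF assms] by blast
  show "VF_continuous D F" unfolding VF_continuous_def
    using cont_inc[OF assms] cont_dec[OF assms] by blast
  show "locally_sp_in_range D F" unfolding locally_sp_in_range_def
    using ordered_F[OF assms] sp[OF assms(3)] by blast
qed

end
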